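(* Let $D$ be a product distribution on $\{0,1\}^n$ with $\mu_i=P(X_i=1)\in(0,1)$ and $\sigma_i=\sqrt{\mu_i(1-\mu_i)}$, and let $f(x)=\prod_{i\in T_1}x_i\prod_{j\in T_0}(1-x_j)$ with $T_0,T_1$ disjoint and $d=|T_0|+|T_1|$. Then, with respect to the basis $\phi_S(x)=\prod_{i\in S}\frac{x_i-\mu_i}{\sigma_i}$, $$L_1(f)=\prod_{i\in T_1}(\mu_i+\sigma_i)\prod_{j\in T_0}(1-\mu_j+\sigma_j)\le 1.21^d.$$
   Context: Fourier coefficients are $\hat f_S=\mathbb{E}_D[f(X)\phi_S(X)]$ and the spectral norm is $L_1(f)=\sum_{S\subseteq[n]}|\hat f_S|$. (This is the BN-induced basis for the BN with no edges.) *)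

theory Defs
  imports "HOL-Analysis.Analysis"
begin

text \<open>Points of {0,1}^n are encoded as functions x :: nat => real with x i in {0,1}
  for i < n and x i = 0 for i >= n (canonical representation).\<close>

definition cube :: "nat \<Rightarrow> (nat \<Rightarrow> real) set" where
  "cube n = {x. (\<forall>i<n. x i = 0 \<or> x i = 1) \<and> (\<forall>i\<ge>n. x i = 0)}"

definition prod_pmf :: "nat \<Rightarrow> (nat \<Rightarrow> real) \<Rightarrow> (nat \<Rightarrow> real) \<Rightarrow> real" where
  "prod_pmf n mu x = (\<Prod>i<n. if x i = 1 then mu i else 1 - mu i)"

definition expect :: "nat \<Rightarrow> (nat \<Rightarrow> real) \<Rightarrow> ((nat \<Rightarrow> real) \<Rightarrow> real) \<Rightarrow> real" where
  "expect n mu g = (\<Sum>x\<in>cube n. prod_pmf n mu x * g x)"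

definition sigma :: "(nat \<Rightarrow> real) \<Rightarrow> nat \<Rightarrow> real" where
  "sigma mu i = sqrt (mu i * (1 - mu i))"

definition phi :: "(nat \<Rightarrow> real) \<Rightarrow> nat set \<Rightarrow> (nat \<Rightarrow> real) \<Rightarrow> real" where
  "phi mu S x = (\<Prod>i\<in>S. (x i - mu i) / sigma mu i)"

definition fourier_coeff :: "nat \<Rightarrow> (nat \<Rightarrow> real) \<Rightarrow> ((nat \<Rightarrow> real) \<Rightarrow> real) \<Rightarrow> nat set \<Rightarrow> real" where
  "fourier_coeff n mu f S = expect n mu (\<lambda>x. f x * phi mu S x)"

definition spectral_norm :: "nat \<Rightarrow> (nat \<Rightarrow> real) \<Rightarrow> ((nat \<Rightarrow> real) \<Rightarrow> real) \<Rightarrow> real" where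
  "spectral_norm n mu f = (\<Sum>S\<in>Pow {..<n}. \<bar>fourier_coeff n mu f S\<bar>)"

end

theory Submission
  imports Defs
begin

lemma cube_Suc: "cube (Suc n) = (\<lambda>(x,b). x(n:=b)) ` (cube n \<times> {0,1})"
proof
  show "cube (Suc n) \<subseteq> (\<lambda>(x,b). x(n:=b)) ` (cube n \<times> {0,1})"
  proof
    fix z assume z: "z \<in> cube (Suc n)"
    have "z = (\<lambda>(x,b). x(n:=b)) (z(n:=0), z n)" by auto
    moreover have "(z(n:=0), z n) \<in> cube n \<times> {0,1}"
      using z unfolding cube_def by (auto simp: less_Suc_eq)
    ultimately show "z \<in> (\<lambda>(x,b). x(n:=b)) ` (cube n \<times> {0,1})" by blast
  qed
next
  show "(\<lambda>(x,b). x(n:=b)) ` (cube n \<times> {0,1}) \<subseteq> cube (Suc n)"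
    unfolding cube_def by (auto simp: less_Suc_eq)
qed

lemma cube_inj: "inj_on (\<lambda>(x,b). x(n:=b)) (cube n \<times> {0,1})"
proof (rule inj_onI, clarify)
  fix x b y c
  assume x: "x \<in> cube n" and y: "y \<in> cube n" and e: "x(n := b) = y(n := c)"
  have "x n = 0" "y n = 0" using x y unfolding cube_def by auto
  moreover have "\<And>i. i \<noteq> n \<Longrightarrow> x i = y i" using fun_cong[OF e] by (metis fun_upd_other)
  moreover have "b = c" using fun_cong[OF e, of n] by simp
  ultimately show "x = y \<and> b = c" by (metis ext)
qed

lemma cube_finite: "finite (cube n)"
proof (induction n)
  case 0
  have "cube 0 = {\<lambda>_. 0}" unfolding cube_def by auto
  then show ?case by simp
next
  case (Suc n)
  then show ?case by (simp add: cube_Suc)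
qed

lemma sum_cube_prod:
  fixes w :: "nat \<Rightarrow> real \<Rightarrow> real"
  shows "(\<Sum>x\<in>cube n. \<Prod>i<n. w i (x i)) = (\<Prod>i<n. w i 1 + w i 0)"
proof (induction n)
  case 0
  have "cube 0 = {\<lambda>_. 0}" unfolding cube_def by auto
  then show ?case by simp
next
  case (Suc n)
  have "(\<Sum>z\<in>cube (Suc n). \<Prod>i<Suc n. w i (z i))
      = (\<Sum>p\<in>cube n \<times> {0,1}. \<Prod>i<Suc n. w i (((\<lambda>(x,b). x(n:=b)) p) i))"
    unfolding cube_Suc by (subst sum.reindex[OF cube_inj]) (simp add: o_def)
  also have "\<dots> = (\<Sum>p\<in>cube n \<times> {0,1}. (\<Prod>i<n. w i (fst p i)) * w n (snd p))"
    by (rule sum.cong) (auto simp: prod.lessThan_Suc)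
  also have "\<dots> = (\<Sum>x\<in>cube n. \<Sum>b\<in>{0,1}. (\<Prod>i<n. w i (x i)) * w n b)"
    by (subst sum.cartesian_product') simp
  also have "\<dots> = (\<Sum>x\<in>cube n. (\<Prod>i<n. w i (x i)) * (w n 1 + w n 0))"
    by (rule sum.cong) (auto simp: algebra_simps)
  also have "\<dots> = (\<Sum>x\<in>cube n. (\<Prod>i<n. w i (x i))) * (w n 1 + w n 0)"
    by (rule sum_distrib_right[symmetric])
  finally show ?case by (simp add: Suc prod.lessThan_Suc)
qed

lemma expect_prod:
  "expect n mu (\<lambda>x. \<Prod>i<n. h i (x i)) = (\<Prod>i<n. mu i * h i 1 + (1 - mu i) * h i 0)"
proof -
  have "expect n mu (\<lambda>x. \<Prod>i<n. h i (x i))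
      = (\<Sum>x\<in>cube n. \<Prod>i<n. (\<lambda>i t. (if t = 1 then mu i else 1 - mu i) * h i t) i (x i))"
    unfolding expect_def prod_pmf_def by (simp add: prod.distrib)
  also have "\<dots> = (\<Prod>i<n. mu i * h i 1 + (1 - mu i) * h i 0)"
    by (subst sum_cube_prod) simp
  finally show ?thesis .
qed


lemma bound121:
  fixes m :: real assumes "0 < m" "m < 1"
  shows "m + sqrt (m * (1 - m)) \<le> 1.21"
proof -
  have q: "0 \<le> (m - 0.855)^2" by simp
  have "m * (1 - m) \<le> (1.21 - m)^2" using q by (simp add: power2_eq_square algebra_simps)
  then have "sqrt (m * (1 - m)) \<le> sqrt ((1.21 - m)^2)" by (rule real_sqrt_le_mono)
  also have "\<dots> = 1.21 - m" using assms by simp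
  finally show ?thesis by simp
qed

lemma sigma_facts:
  assumes "0 < mu i" "mu i < 1"
  shows "0 < sigma mu i" "sigma mu i * sigma mu i = mu i * (1 - mu i)"
  using assms unfolding sigma_def by (auto simp: real_sqrt_mult_self)

theorem mainTheorem6:
  fixes n :: nat and mu :: "nat \<Rightarrow> real" and T0 T1 :: "nat set"
  assumes "\<forall>i<n. 0 < mu i \<and> mu i < 1"
    and "T0 \<subseteq> {..<n}" and "T1 \<subseteq> {..<n}" and "T0 \<inter> T1 = {}"
  shows "spectral_norm n mu (\<lambda>x. (\<Prod>i\<in>T1. x i) * (\<Prod>j\<in>T0. 1 - x j))
           = (\<Prod>i\<in>T1. mu i + sigma mu i) * (\<Prod>j\<in>T0. 1 - mu j + sigma mu j)
      \<and> (\<Prod>i\<in>T1. mu i + sigma mu i) * (\<Prod>j\<in>T0. 1 - mu j + sigma mu j)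
           \<le> 1.21 ^ (card T0 + card T1)"
proof
  note mub = assms(1)
  define f where "f = (\<lambda>x::nat\<Rightarrow>real. (\<Prod>i\<in>T1. x i) * (\<Prod>j\<in>T0. 1 - x j))"
  define h where "h = (\<lambda>S i (t::real). (if i\<in>T1 then t else 1) * (if i\<in>T0 then 1 - t else 1)
      * (if i\<in>S then (t - mu i) / sigma mu i else 1))"
  define p where "p = (\<lambda>i. if i \<in> T1 \<union> T0 then sigma mu i else 0)"
  define q where "q = (\<lambda>i. if i \<in> T1 then mu i else if i \<in> T0 then 1 - mu i else 1)"
  have T1r: "{..<n} \<inter> T1 = T1" and T0r: "{..<n} \<inter> T0 = T0" using assms by auto
  have step1: "f x * phi mu S x = (\<Prod>i<n. h S i (x i))" if S: "S \<subseteq> {..<n}" for S x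
  proof -
    have Sr: "{..<n} \<inter> S = S" using S by auto
    have a: "(\<Prod>i\<in>T1. x i) = (\<Prod>i<n. if i\<in>T1 then x i else 1)"
      using prod.inter_restrict[of "{..<n}" "\<lambda>i. x i" T1] T1r by simp
    have b: "(\<Prod>i\<in>T0. 1 - x i) = (\<Prod>i<n. if i\<in>T0 then 1 - x i else 1)"
      using prod.inter_restrict[of "{..<n}" "\<lambda>i. 1 - x i" T0] T0r by simp
    have c: "phi mu S x = (\<Prod>i<n. if i\<in>S then (x i - mu i) / sigma mu i else 1)"
      unfolding phi_def
      using prod.inter_restrict[of "{..<n}" "\<lambda>i. (x i - mu i) / sigma mu i" S] Sr by simp
    show ?thesis unfolding f_def h_def a b c by (simp add: prod.distrib)
  qed
  have step3: "\<bar>mu i * h S i 1 + (1 - mu i) * h S i 0\<bar> = (if i \<in> S then p i else q i)"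
    if i: "i < n" for S i
  proof -
    have m: "0 < mu i" "mu i < 1" using mub i by auto
    note sf = sigma_facts[of mu i, OF m]
    have e1: "mu i * (1 - mu i) / sigma mu i = sigma mu i"
      using sf by (simp add: field_simps)
    have e2: "(1 - mu i) * ((0 - mu i) / sigma mu i) = - sigma mu i"
      using e1 by (simp add: field_simps)
    have e3: "mu i * ((1 - mu i) / sigma mu i) = sigma mu i"
      using e1 by (simp add: field_simps)
    have e4: "mu i * ((1 - mu i) / sigma mu i) + (1 - mu i) * ((0 - mu i) / sigma mu i) = 0"
      by (simp add: field_simps)
    have dj: "i \<in> T1 \<Longrightarrow> i \<notin> T0" using assms(4) by auto
    have sg: "\<bar>sigma mu i\<bar> = sigma mu i" using sf(1) by simp
    have m1: "\<bar>mu i\<bar> = mu i" "\<bar>1 - mu i\<bar> = 1 - mu i" using m by auto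
    have pm: "0 < mu i * (1 - mu i)" using m by simp
    have e5: "\<bar>mu i * (1 - mu i)\<bar> / sigma mu i = sigma mu i"
      "\<bar>(1 - mu i) * mu i\<bar> / sigma mu i = sigma mu i"
      using e1 pm by (simp_all add: mult.commute)
    show ?thesis
      apply (cases "i \<in> S"; cases "i \<in> T1"; cases "i \<in> T0")
             apply (simp_all add: h_def p_def q_def dj e2 e3 e4 e5 sg m1)
      done
  qed
  have step2: "\<bar>fourier_coeff n mu f S\<bar> = (\<Prod>i<n. if i \<in> S then p i else q i)"
    if S: "S \<subseteq> {..<n}" for S
  proof -
    have "fourier_coeff n mu f S = expect n mu (\<lambda>x. \<Prod>i<n. h S i (x i))"
      unfolding fourier_coeff_def using step1[OF S] by simp
    also have "\<dots> = (\<Prod>i<n. mu i * h S i 1 + (1 - mu i) * h S i 0)"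
      by (rule expect_prod)
    finally have "\<bar>fourier_coeff n mu f S\<bar> = (\<Prod>i<n. \<bar>mu i * h S i 1 + (1 - mu i) * h S i 0\<bar>)"
      by (simp add: abs_prod)
    also have "\<dots> = (\<Prod>i<n. if i \<in> S then p i else q i)"
      by (rule prod.cong) (auto simp: step3)
    finally show ?thesis .
  qed
  have "spectral_norm n mu f = (\<Sum>S\<in>Pow {..<n}. (\<Prod>i\<in>S. p i) * (\<Prod>i\<in>{..<n} - S. q i))"
    unfolding spectral_norm_def
  proof (rule sum.cong)
    fix S assume "S \<in> Pow {..<n}"
    then have S: "S \<subseteq> {..<n}" by auto
    have "{..<n} \<inter> {x. x \<in> S} = S" "{..<n} \<inter> - {x. x \<in> S} = {..<n} - S" using S by auto
    then show "\<bar>fourier_coeff n mu f S\<bar> = (\<Prod>i\<in>S. p i) * (\<Prod>i\<in>{..<n} - S. q i)"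
      using step2[OF S] prod.If_cases[of "{..<n}" "\<lambda>i. i \<in> S" p q] by simp
  qed simp
  also have "\<dots> = (\<Prod>i<n. p i + q i)" by (rule prod_add[symmetric]) simp
  also have "\<dots> = (\<Prod>i<n. (if i\<in>T1 then mu i + sigma mu i else 1) * (if i\<in>T0 then 1 - mu i + sigma mu i else 1))"
    by (rule prod.cong) (use assms(4) in \<open>auto simp: p_def q_def\<close>)
  also have "\<dots> = (\<Prod>i\<in>T1. mu i + sigma mu i) * (\<Prod>j\<in>T0. 1 - mu j + sigma mu j)"
    unfolding prod.distrib
    using prod.inter_restrict[of "{..<n}" "\<lambda>i. mu i + sigma mu i" T1]
      prod.inter_restrict[of "{..<n}" "\<lambda>i. 1 - mu i + sigma mu i" T0] T1r T0r by simp
  finally show "spectral_norm n mu (\<lambda>x. (\<Prod>i\<in>T1. x i) * (\<Prod>j\<in>T0. 1 - x j))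
           = (\<Prod>i\<in>T1. mu i + sigma mu i) * (\<Prod>j\<in>T0. 1 - mu j + sigma mu j)"
    unfolding f_def .
next
  have B1: "(\<Prod>i\<in>T1. mu i + sigma mu i) \<le> (\<Prod>i\<in>T1. 1.21)"
  proof (rule prod_mono)
    fix i assume "i \<in> T1"
    then have m: "0 < mu i" "mu i < 1" using assms by auto
    show "0 \<le> mu i + sigma mu i \<and> mu i + sigma mu i \<le> 1.21"
      using bound121[OF m] sigma_facts(1)[of mu i, OF m] m unfolding sigma_def by auto
  qed
  have B0: "(\<Prod>i\<in>T0. 1 - mu i + sigma mu i) \<le> (\<Prod>i\<in>T0. 1.21)"
  proof (rule prod_mono)
    fix i assume "i \<in> T0"
    then have m: "0 < mu i" "mu i < 1" using assms by auto
    have m': "0 < 1 - mu i" "1 - mu i < 1" using m by auto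
    have "sigma mu i = sqrt ((1 - mu i) * (1 - (1 - mu i)))" unfolding sigma_def
      by (simp add: mult.commute)
    then show "0 \<le> 1 - mu i + sigma mu i \<and> 1 - mu i + sigma mu i \<le> 1.21"
      using bound121[OF m'] sigma_facts(1)[of mu i, OF m] m by auto
  qed
  have P1: "0 \<le> (\<Prod>i\<in>T1. mu i + sigma mu i)"
  proof (rule prod_nonneg)
    fix i assume "i \<in> T1"
    then have m: "0 < mu i" "mu i < 1" using assms by auto
    show "0 \<le> mu i + sigma mu i" using sigma_facts(1)[of mu i, OF m] m by simp
  qed
  have P0: "0 \<le> (\<Prod>i\<in>T0. 1 - mu i + sigma mu i)"
  proof (rule prod_nonneg)
    fix i assume "i \<in> T0"
    then have m: "0 < mu i" "mu i < 1" using assms by auto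
    show "0 \<le> 1 - mu i + sigma mu i" using sigma_facts(1)[of mu i, OF m] m by simp
  qed
  have "(\<Prod>i\<in>T1. mu i + sigma mu i) * (\<Prod>j\<in>T0. 1 - mu j + sigma mu j)
      \<le> (\<Prod>i\<in>T1. 1.21) * (\<Prod>i\<in>T0. (1.21::real))"
    by (rule mult_mono[OF B1 B0]) (auto simp: P1 P0)
  also have "\<dots> = 1.21 ^ (card T0 + card T1)" by (simp add: power_add mult.commute)
  finally show "(\<Prod>i\<in>T1. mu i + sigma mu i) * (\<Prod>j\<in>T0. 1 - mu j + sigma mu j)
           \<le> 1.21 ^ (card T0 + card T1)" .
qed

end
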